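(* For $k\in\mathbb{N}$ let $c_k=\dfrac{3\,|B_{2k}|\,(2^{2k}-2)+(-1)^{k}}{(2k)!}$, where $B_{2k}$ denotes the Bernoulli number. For every $x\in(0,\pi/2)$ and every integer $m\ge 3$, $$4+\sum_{k=1}^{m-1}c_k x^{2k}+\Big(\frac{2x}{\pi}\Big)^{2m}\Big(\frac{3\pi}{2}-4-\sum_{k=1}^{m-1}c_k\Big(\frac{\pi}{2}\Big)^{2k}\Big)>3\,\frac{x}{\sin x}+\cos x>4+\sum_{k=1}^{m}c_k x^{2k}.$$
   Context: $B_j$ are the Bernoulli numbers ($B_2=1/6$, $B_4=-1/30$, $B_6=1/42,\dots$). The quantity $3\pi/2$ is the value at $x=\pi/2$ of $3x/\sin x+\cos x$. *)

theory Defs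
  imports Complex_Main
begin

text \<open>Bernoulli numbers, via the standard recurrence
  sum_{j<=n} (n+1 choose j) B_j = 0 for n >= 1, B_0 = 1 (so B_1 = -1/2, B_2 = 1/6, B_4 = -1/30).\<close>
fun bernoulli :: "nat \<Rightarrow> real" where
  "bernoulli n = (if n = 0 then 1
     else - (\<Sum>j<n. real (Suc n choose j) * bernoulli j) / real (Suc n))"

declare bernoulli.simps [simp del]

definition c_coeff :: "nat \<Rightarrow> real" where
  "c_coeff k = (3 * \<bar>bernoulli (2*k)\<bar> * (2 ^ (2*k) - 2) + (-1) ^ k) / fact (2*k)"

end

theory Submission imports Defs "HOL-Computational_Algebra.Formal_Power_Series" begin
unbundle fps_syntax

lemma bern_rec: assumes "n \<ge> 2" shows "(\<Sum>j<n. real (n choose j) * bernoulli j) = 0"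
proof -
  obtain m where m: "n = Suc m" "m \<ge> 1" using assms by (cases n) auto
  have "bernoulli m = - (\<Sum>j<m. real (Suc m choose j) * bernoulli j) / real (Suc m)"
    using m by (subst bernoulli.simps) simp
  hence "real (Suc m) * bernoulli m + (\<Sum>j<m. real (Suc m choose j) * bernoulli j) = 0"
    by (simp add: field_simps)
  thus ?thesis using m by (simp add: add.commute)
qed

lemma bern0: "bernoulli 0 = 1" by (simp add: bernoulli.simps)
lemma bern1: "bernoulli 1 = -1/2" by (simp add: bernoulli.simps bern0)

definition FB :: "real fps" where "FB = Abs_fps (\<lambda>n. bernoulli n / fact n)"
definition EE :: "real fps" where "EE = fps_exp 1"

lemma FB_eq: "FB * (EE - 1) = fps_X"
proof (rule fps_ext)
  fix n
  show "(FB * (EE - 1)) $ n = fps_X $ n"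
  proof (cases "n \<ge> 2")
    case True
    have "(FB * (EE - 1)) $ n = (\<Sum>i=0..n. bernoulli i / fact i * (if n - i = 0 then 0 else 1 / fact (n-i)))"
      by (auto simp: fps_mult_nth FB_def EE_def intro!: sum.cong)
    also have "\<dots> = (\<Sum>i<n. bernoulli i / fact i * (1 / fact (n-i)))"
    proof -
      have "{0..n} = insert n {..<n}" by auto
      thus ?thesis by (simp add: sum.insert mult.commute)
    qed
    also have "\<dots> = (\<Sum>i<n. real (n choose i) * bernoulli i) / fact n"
      by (simp add: sum_divide_distrib binomial_fact field_simps)
    also have "\<dots> = 0" using bern_rec[OF True] by simp
    finally show ?thesis using True by simp
  next
    case False
    then have "n = 0 \<or> n = 1" by auto
    then show ?thesis
      by (auto simp: fps_mult_nth FB_def EE_def bern0)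
  qed
qed


definition gg :: "nat \<Rightarrow> real" where
  "gg n = bernoulli n / fact n + (if n = 1 then 1/2 else 0)"
definition GG :: "real fps" where "GG = Abs_fps gg"

lemma GG_eq: "GG = FB + fps_const (1/2) * fps_X"
  by (rule fps_ext) (simp add: GG_def FB_def gg_def)

lemma GG_H: "2 * GG * (EE - 1) = fps_X * (EE + 1)"
proof -
  have c: "2 * fps_const (1/2) = (1::real fps)"
    by (simp add: numeral_fps_const fps_const_mult [symmetric])
  have "2 * GG * (EE - 1) = 2 * (FB * (EE - 1)) + (2 * fps_const (1/2)) * (fps_X * (EE - 1))"
    by (simp add: GG_eq algebra_simps)
  also have "\<dots> = 2 * fps_X + fps_X * (EE - 1)" by (simp only: c FB_eq mult_1)
  finally show ?thesis by algebra
qed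

lemma EE_deriv: "fps_deriv EE = EE" by (simp add: EE_def)

lemma GG_H': "2 * fps_deriv GG * (EE - 1) + 2 * GG * EE = (EE + 1) + fps_X * EE"
proof -
  have "fps_deriv (2 * GG * (EE - 1)) = fps_deriv (fps_X * (EE + 1))" by (simp only: GG_H)
  thus ?thesis by (simp add: EE_deriv algebra_simps)
qed

lemma EE1_nz: "(EE - 1) ^ 2 \<noteq> (0 :: real fps)"
proof -
  have "(EE - 1) $ 1 \<noteq> 0" by (simp add: EE_def)
  hence "EE - 1 \<noteq> 0" by auto
  thus ?thesis by simp
qed

lemma riccati: "4 * (fps_X * fps_deriv GG) = 4 * GG + fps_X ^ 2 - 4 * GG ^ 2"
proof -
  have "(4 * (fps_X * fps_deriv GG)) * (EE - 1) ^ 2 = (4 * GG + fps_X ^ 2 - 4 * GG ^ 2) * (EE - 1) ^ 2"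
    using GG_H GG_H' by algebra
  thus ?thesis using EE1_nz by simp
qed


lemma gg0: "gg 0 = 1" by (simp add: gg_def bern0)
lemma gg1: "gg 1 = 0" using bern1 by (simp add: gg_def)

lemma riccati_coeff:
  "4 * (real n * gg n) = 4 * gg n + (if n = 2 then 1 else 0) - 4 * (\<Sum>i=0..n. gg i * gg (n-i))"
proof -
  have a: "(fps_X * fps_deriv GG) $ n = real n * gg n" by (simp add: fps_mult_fps_X_deriv_shift GG_def)
  have b: "(GG^2) $ n = (\<Sum>i=0..n. gg i * gg (n-i))" by (simp add: power2_eq_square fps_mult_nth GG_def)
  have c: "(fps_X^2 :: real fps) $ n = (if n = 2 then 1 else 0)" by simp
  have d: "(4 * f) $ n = 4 * f $ n" for f :: "real fps" by (simp add: numeral_fps_const)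
  have "(4 * (fps_X * fps_deriv GG)) $ n = (4 * GG + fps_X ^ 2 - 4 * GG ^ 2) $ n"
    using riccati by simp
  moreover have "GG $ n = gg n" by (simp add: GG_def)
  ultimately show ?thesis by (simp only: fps_add_nth fps_sub_nth a b c d)
qed

lemma sum_split_ends:
  assumes "n \<ge> (2::nat)" shows "(\<Sum>i=0..n. f i) = f 0 + f n + (\<Sum>i=1..n-1. (f i :: real))"
proof -
  obtain p where p: "n = Suc p" "p \<ge> 1" using assms by (cases n) auto
  have "(\<Sum>i=0..n. f i) = f 0 + (\<Sum>i=Suc 0..n. f i)" by (simp add: sum.atLeast_Suc_atMost)
  moreover have "(\<Sum>i=Suc 0..Suc p. f i) = (\<Sum>i=1..p. f i) + f (Suc p)"
    using p by simp
  ultimately show ?thesis using p by simp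
qed

lemma gg_rec: assumes "n \<ge> 2"
  shows "4 * (real n + 1) * gg n = (if n = 2 then 1 else 0) - 4 * (\<Sum>i=1..n-1. gg i * gg (n-i))"
  using riccati_coeff[of n] sum_split_ends[OF assms, of "\<lambda>i. gg i * gg (n-i)"] gg0
  by (simp add: algebra_simps)

lemma gg_odd: "odd n \<Longrightarrow> gg n = 0"
proof (induction n rule: less_induct)
  case (less n)
  show ?case
  proof (cases "n = 1")
    case True thus ?thesis using gg1 by auto
  next
    case False
    with less.prems have n3: "n \<ge> 3" by presburger
    have "gg i * gg (n - i) = 0" if "i \<in> {1..n-1}" for i
    proof (cases "odd i")
      case True thus ?thesis using less.IH[of i] that by auto
    next
      case False
      hence "odd (n - i)" using less.prems that by auto
      thus ?thesis using less.IH[of "n-i"] that by auto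
    qed
    hence "(\<Sum>i=1..n-1. gg i * gg (n-i)) = 0" by (intro sum.neutral) blast
    with gg_rec[of n] n3 have "4 * (real n + 1) * gg n = 0" by auto
    thus ?thesis by simp
  qed
qed

lemma sum_even:
  assumes "finite (A::nat set)" "\<And>i. i \<in> A \<Longrightarrow> odd i \<Longrightarrow> h i = (0::real)"
  shows "sum h A = sum (\<lambda>j. h (2*j)) {j. 2*j \<in> A}"
proof -
  have "sum h A = sum h (A \<inter> {i. even i})"
    using assms by (intro sum.mono_neutral_right) auto
  also have "A \<inter> {i. even i} = (\<lambda>j. 2*j) ` {j. 2*j \<in> A}" by auto
  also have "sum h \<dots> = sum (\<lambda>j. h (2*j)) {j. 2*j \<in> A}"
    by (subst sum.reindex) (auto simp: inj_on_def)
  finally show ?thesis .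
qed

definition ee :: "nat \<Rightarrow> real" where "ee k = (-1)^(k+1) * 4^k * gg (2*k)"

lemma gg_ee: "gg (2*k) = (-1)^(k+1) * ee k / 4^k"
proof -
  have "(-1::real)^(k+1) * (-1)^(k+1) = 1" by (simp add: power_add[symmetric] power_mult[symmetric] mult.commute[of _ 2])
  hence "(-1)^(k+1) * ee k / 4^k = ((-1::real)^(k+1) * (-1)^(k+1)) * gg (2*k)"
    unfolding ee_def by (simp add: field_simps)
  thus ?thesis using \<open>(-1::real)^(k+1) * (-1)^(k+1) = 1\<close> by simp
qed

lemma ee_prod: assumes "j \<le> k" shows "gg (2*j) * gg (2*(k-j)) = (-1)^k * (ee j * ee (k-j)) / 4^k"
proof -
  have "(-1::real)^(j+1) * (-1)^(k-j+1) = (-1)^k"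
  proof -
    have "(-1::real)^(j+1) * (-1)^(k-j+1) = (-1)^(j+1+(k-j+1))" by (simp add: power_add)
    also have "j+1+(k-j+1) = k + 2" using assms by simp
    finally show ?thesis by simp
  qed
  moreover have "(4::real)^j * 4^(k-j) = 4^k" using assms by (simp add: power_add[symmetric])
  ultimately show ?thesis unfolding gg_ee
    by (simp add: field_simps)
qed

lemma alg_aux:
  fixes c e I S s t P :: real
  assumes "4 * c * (s * e / P) = I - 4 * (t * S / P)" "s * s = 1" "s * t = -1" "P > 0"
  shows "c * e = s * P / 4 * I + S"
proof -
  have "c * e * (s * s) = s * P / 4 * (4 * c * (s * e / P)) " using assms(4) by (simp add: field_simps)
  also have "\<dots> = s * P / 4 * I - (s * t) * S" unfolding assms(1) using assms(4) by (simp add: field_simps)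
  finally show ?thesis using assms(2,3) by simp
qed

lemma ee_rec: assumes "k \<ge> 1"
  shows "(2 * real k + 1) * ee k = (if k = 1 then 1 else 0) + (\<Sum>j=1..k-1. ee j * ee (k-j))"
proof -
  have "(\<Sum>i=1..2*k-1. gg i * gg (2*k-i)) = (\<Sum>j\<in>{j. 2*j \<in> {1..2*k-1}}. gg (2*j) * gg (2*k-2*j))"
    by (rule sum_even) (auto simp: gg_odd)
  also have "{j. 2*j \<in> {1..2*k-1}} = {1..k-1}" by auto
  also have "(\<Sum>j=1..k-1. gg (2*j) * gg (2*k-2*j)) = (\<Sum>j=1..k-1. (-1)^k * (ee j * ee (k-j)) / 4^k)"
    by (intro sum.cong refl) (metis ee_prod diff_mult_distrib2 atLeastAtMost_iff le_diff_conv2 le_add1 le_trans assms diff_le_self)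
  finally have S: "(\<Sum>i=1..2*k-1. gg i * gg (2*k-i)) = (-1)^k * (\<Sum>j=1..k-1. ee j * ee (k-j)) / 4^k"
    by (simp add: sum_distrib_left sum_divide_distrib)
  have "4 * (real (2*k) + 1) * gg (2*k) = (if k = 1 then 1 else 0) - 4 * ((-1)^k * (\<Sum>j=1..k-1. ee j * ee (k-j)) / 4^k)"
    using gg_rec[of "2*k"] assms S by simp
  hence "4 * (2 * real k + 1) * ((-1)^(k+1) * ee k / 4^k) = (if k = 1 then 1 else 0) - 4 * ((-1)^k * (\<Sum>j=1..k-1. ee j * ee (k-j)) / 4^k)"
    by (simp add: gg_ee)
  moreover have "(-1::real)^(k+1) * (-1)^(k+1) = 1" by (simp add: power_add[symmetric] power_mult[symmetric] mult.commute[of _ 2])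
  moreover have "(-1::real)^(k+1) * (-1)^k = -1" by (simp add: power_add[symmetric] power_mult[symmetric] mult.commute[of _ 2])
  moreover have "(4::real)^k > 0" by simp
  ultimately have "(2 * real k + 1) * ee k = (-1)^(k+1) * 4^k / 4 * (if k = 1 then 1 else 0) + (\<Sum>j=1..k-1. ee j * ee (k-j))"
    by (rule alg_aux)
  thus ?thesis by (cases "k = 1") auto
qed


lemma ee1: "ee 1 = 1/3" using ee_rec[of 1] by simp
lemma ee1': "ee (Suc 0) = 1/3" using ee1 by simp
lemma fact3: "fact 3 = (6::real)" by (simp add: eval_nat_numeral)

lemma ee_pos: "k \<ge> 1 \<Longrightarrow> ee k > 0"
proof (induction k rule: less_induct)
  case (less k)
  show ?case
  proof (cases "k = 1")
    case True thus ?thesis by (simp add: ee1' fact3)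
  next
    case False
    have "(\<Sum>j=1..k-1. ee j * ee (k-j)) > 0"
      using False less by (intro sum_pos) (auto intro!: mult_pos_pos less.IH)
    with ee_rec[of k] less.prems False have "(2 * real k + 1) * ee k > 0" by simp
    thus ?thesis by (simp add: zero_less_mult_iff)
  qed
qed

lemma ee_upper: "k \<ge> 1 \<Longrightarrow> ee k \<le> 2 / 6^k"
proof (induction k rule: less_induct)
  case (less k)
  show ?case
  proof (cases "k = 1")
    case True thus ?thesis by (simp add: ee1' fact3)
  next
    case False
    have "ee j * ee (k-j) \<le> 4 / 6^k" if "j \<in> {1..k-1}" for j
    proof -
      have "ee j * ee (k-j) \<le> (2/6^j) * (2/6^(k-j))"
      proof -
        have "k - j \<ge> 1" using that by auto
        thus ?thesis using that less False ee_pos[of j] ee_pos[of "k-j"] by (intro mult_mono less.IH) auto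
      qed
      also have "\<dots> = 4 / (6^j * 6^(k-j))" by simp
      also have "(6::real)^j * 6^(k-j) = 6^k"
      proof -
        have jk: "j + (k-j) = k" using that by auto
        show ?thesis by (simp only: power_add[symmetric] jk)
      qed
      finally show ?thesis by simp
    qed
    hence "(\<Sum>j=1..k-1. ee j * ee (k-j)) \<le> real (card {1..k-1}) * (4 / 6^k)"
      by (intro sum_bounded_above) auto
    also have "\<dots> \<le> (2 * real k + 1) * (2 / 6^k)"
      using less.prems by (simp add: field_simps)
    finally have "(2 * real k + 1) * ee k \<le> (2 * real k + 1) * (2 / 6^k)"
      using ee_rec[of k] less.prems False by simp
    thus ?thesis by (smt (verit) mult_le_cancel_left of_nat_0_le_iff)
  qed
qed

lemma lower_aux:
  fixes k e F G :: real
  assumes "(2*k+1) * e \<ge> (1/3) * (2 / F)" "G = (2*k+1) * (2*k) * F" "F > 0" "k \<ge> 2"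
  shows "e \<ge> 2 / G"
proof -
  have w: "0 < (2*k+1)*3*F" using assms by simp
  have "(2*k+1)*3*F \<le> (2*k+1)*(2*k)*F" using assms by (intro mult_right_mono mult_left_mono) auto
  hence "2 / G \<le> 2 / ((2*k+1)*3*F)" unfolding assms(2) using w by (intro frac_le) auto
  also have "2 / ((2*k+1)*3*F) = ((1/3) * (2 / F)) / (2*k+1)" by simp
  also have "\<dots> \<le> e" using assms(1) assms(4) by (subst pos_divide_le_eq) (auto simp: mult.commute)
  finally show ?thesis .
qed

lemma ee_lower: "k \<ge> 1 \<Longrightarrow> ee k \<ge> 2 / fact (2*k+1)"
proof (induction k rule: less_induct)
  case (less k)
  show ?case
  proof (cases "k = 1")
    case True thus ?thesis by (simp add: ee1' fact3)
  next
    case False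
    hence k2: "k \<ge> 2" using less.prems by simp
    have "ee 1 * ee (k-1) \<le> (\<Sum>j=1..k-1. ee j * ee (k-j))"
    proof (rule member_le_sum)
      fix j assume j: "j \<in> {1..k-1} - {1}"
      hence "ee j > 0" "ee (k-j) > 0" by (auto intro!: ee_pos)
      thus "0 \<le> ee j * ee (k-j)" by simp
    qed (use k2 in auto)
    moreover have L: "ee (k-1) \<ge> 2 / fact (2*(k-1)+1)" using k2 by (intro less.IH) auto
    moreover have "ee 1 * ee (k-1) \<ge> (1/3) * (2 / fact (2*(k-1)+1))"
      unfolding ee1 using L by (intro mult_left_mono) auto
    moreover have "(2*real k+1)*ee k = (\<Sum>j=1..k-1. ee j * ee (k-j))" using ee_rec[of k] k2 by simp
    moreover have "fact (2*k+1) = (2*real k+1) * (2*real k) * fact (2*(k-1)+1)"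
    proof -
      have "2*k+1 = Suc (Suc (2*(k-1)+1))" using k2 by simp
      hence "fact (2*k+1) = real (Suc (Suc (2*(k-1)+1))) * (real (Suc (2*(k-1)+1)) * fact (2*(k-1)+1))"
        by (simp only: fact_Suc of_nat_mult)
      thus ?thesis using k2 by (simp add: of_nat_diff)
    qed
    ultimately have A: "(2 * real k + 1) * ee k \<ge> (1/3) * (2 / fact (2*(k-1)+1))"
      and B: "fact (2*k+1) = (2*real k+1) * (2*real k) * fact (2*(k-1)+1)"
      by linarith+
    have C: "fact (2*(k-1)+1) > (0::real)" by simp
    have D: "real k \<ge> 2" using k2 by simp
    show ?thesis using lower_aux[where k="real k" and e="ee k" and F="fact (2*(k-1)+1)" and G="fact (2*k+1)", OF A B C D] .
  qed
qed


definition sc :: "real \<Rightarrow> real fps \<Rightarrow> real fps" where "sc c f = Abs_fps (\<lambda>n. c^n * f $ n)"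

lemma sc_mult: "sc c (f * g) = sc c f * sc c g"
proof (rule fps_ext)
  fix n
  have "sc c (f * g) $ n = (\<Sum>i=0..n. c^i * f$i * (c^(n-i) * g$(n-i)))"
    unfolding sc_def fps_nth_Abs_fps fps_mult_nth sum_distrib_left
  proof (intro sum.cong refl)
    fix i assume "i \<in> {0..n}"
    hence "c^n = c^i * c^(n-i)" by (simp add: power_add[symmetric])
    thus "c^n * (f$i * g$(n-i)) = c^i * f$i * (c^(n-i) * g$(n-i))" by simp
  qed
  also have "\<dots> = (sc c f * sc c g) $ n" by (simp add: sc_def fps_mult_nth mult.assoc)
  finally show "sc c (f * g) $ n = (sc c f * sc c g) $ n" .
qed

lemma sc_add: "sc c (f + g) = sc c f + sc c g" by (rule fps_ext) (simp add: sc_def algebra_simps)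
lemma sc_diff: "sc c (f - g) = sc c f - sc c g" by (rule fps_ext) (simp add: sc_def algebra_simps)
lemma sc_one: "sc c 1 = 1" by (rule fps_ext) (simp add: sc_def)
lemma sc_two: "sc c 2 = 2" by (rule fps_ext) (simp add: sc_def numeral_fps_const)
lemma sc_X: "sc c fps_X = fps_const c * fps_X" by (rule fps_ext) (auto simp: sc_def le_Suc_eq)
lemma sc_exp: "sc c (fps_exp a) = fps_exp (c * a)" by (rule fps_ext) (simp add: sc_def power_mult_distrib)

definition GS :: "real fps" where "GS = sc 2 GG"
definition EM :: "real fps" where "EM = fps_exp (-1)"
definition SS :: "real fps" where "SS = 2 * GG - GS"

lemma EM_EE: "EM * EE = 1"
  unfolding EM_def EE_def by (simp flip: fps_exp_add_mult)
lemma EE2: "fps_exp 2 = EE * EE"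
  unfolding EE_def by (simp flip: fps_exp_add_mult)

lemma GS_H: "2 * GS * (EE * EE - 1) = 2 * fps_X * (EE * EE + 1)"
proof -
  have "sc 2 (2 * GG * (EE - 1)) = sc 2 (fps_X * (EE + 1))" by (simp only: GG_H)
  hence "2 * GS * (fps_exp 2 - 1) = (fps_const 2 * fps_X) * (fps_exp 2 + 1)"
    by (simp only: sc_mult sc_add sc_diff sc_one sc_two sc_X sc_exp EE_def GS_def) simp
  thus ?thesis by (simp add: EE2 numeral_fps_const)
qed

lemma SS_H: "SS * (EE - EM) = 2 * fps_X"
  using GG_H GS_H EM_EE unfolding SS_def by algebra


lemma SS_nth: "SS $ n = (2 - 2^n) * gg n"
  by (simp add: SS_def GS_def sc_def GG_def numeral_fps_const algebra_simps)

lemma EEEM_nth: "(EE - EM) $ m = (1 - (-1)^m) / fact m"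
  by (simp add: EE_def EM_def diff_divide_distrib)

definition aa :: "nat \<Rightarrow> real" where "aa k = (-1)^k * (2 - 4^k) * gg (2*k)"

lemma aa0: "aa 0 = 1" by (simp add: aa_def gg0)

lemma aa_ee: "k \<ge> 1 \<Longrightarrow> aa k = (4^k - 2) / 4^k * ee k"
proof -
  have s: "(-1::real)^k * (-1)^(k+1) = -1" by (simp add: power_add[symmetric] power_mult[symmetric] mult.commute[of _ 2])
  have "aa k = ((-1::real)^k * (-1)^(k+1)) * (2 - 4^k) * ee k / 4^k"
    unfolding aa_def gg_ee by (simp add: field_simps)
  thus ?thesis unfolding s by (simp add: field_simps)
qed

lemma sinh_coeff: "(\<Sum>j=0..N. (2 - 4^j) * gg (2*j) * (2 / fact (2*(N-j)+1))) = (if N = 0 then 2 else 0)"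
proof -
  have "(SS * (EE - EM)) $ (2*N+1) = (2 * fps_X :: real fps) $ (2*N+1)" using SS_H by simp
  moreover have "(2 * fps_X :: real fps) $ (2*N+1) = (if N = 0 then 2 else 0)"
    by (simp add: numeral_fps_const)
  moreover have "(SS * (EE - EM)) $ (2*N+1) = (\<Sum>i=0..2*N+1. SS $ i * (EE - EM) $ (2*N+1-i))"
    by (simp only: fps_mult_nth)
  ultimately have "(\<Sum>i=0..2*N+1. SS $ i * (EE - EM) $ (2*N+1-i)) = (if N = 0 then 2 else 0)"
    by simp
  also have "(\<Sum>i=0..2*N+1. SS $ i * (EE - EM) $ (2*N+1-i))
      = (\<Sum>j\<in>{j. 2*j \<in> {0..2*N+1}}. SS $ (2*j) * (EE - EM) $ (2*N+1-2*j))"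
    by (rule sum_even) (auto simp: SS_nth gg_odd)
  also have "{j. 2*j \<in> {0..2*N+1}} = {0..N}" by auto
  also have "(\<Sum>j=0..N. SS $ (2*j) * (EE - EM) $ (2*N+1-2*j)) = (\<Sum>j=0..N. (2 - 4^j) * gg (2*j) * (2 / fact (2*(N-j)+1)))"
  proof (intro sum.cong refl)
    fix j assume "j \<in> {0..N}"
    hence e: "2*N+1-2*j = 2*(N-j)+1" by auto
    show "SS $ (2*j) * (EE - EM) $ (2*N+1-2*j) = (2 - 4^j) * gg (2*j) * (2 / fact (2*(N-j)+1))"
      unfolding e SS_nth EEEM_nth by (simp add: power_mult)
  qed
  finally show ?thesis .
qed

lemma alg_aux2:
  fixes a b c g F s :: real
  assumes "a * b = s" "F \<noteq> 0"
  shows "(a * c * g) * (b / F) = s / 2 * (c * g * (2 / F))"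
proof -
  have "(a * c * g) * (b / F) = (a * b) * c * g / F" by simp
  also have "s / 2 * (c * g * (2 / F)) = s * c * g / F" by simp
  ultimately show ?thesis using assms(1) by simp
qed

lemma aa_coeff: "(\<Sum>j\<le>N. aa j * ((-1)^(N-j) / fact (2*(N-j)+1))) = (if N = 0 then 1 else 0)"
proof -
  have "(\<Sum>j\<le>N. aa j * ((-1)^(N-j) / fact (2*(N-j)+1)))
      = (\<Sum>j=0..N. (-1)^N / 2 * ((2 - 4^j) * gg (2*j) * (2 / fact (2*(N-j)+1))))"
  proof (intro sum.cong)
    fix j assume "j \<in> {0..N}"
    hence "(-1::real)^j * (-1)^(N-j) = (-1)^N" by (simp add: power_add[symmetric])
    thus "aa j * ((-1)^(N-j) / fact (2*(N-j)+1)) = (-1)^N / 2 * ((2 - 4^j) * gg (2*j) * (2 / fact (2*(N-j)+1)))"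
      unfolding aa_def by (rule alg_aux2) simp
  qed (auto simp: atLeast0AtMost)
  also have "\<dots> = (-1)^N / 2 * (if N = 0 then 2 else 0)"
    by (simp only: sum_distrib_left[symmetric] sinh_coeff)
  also have "(-1::real)^N / 2 * (if N = 0 then 2 else 0) = (if N = 0 then 1 else 0)" by simp
  finally show ?thesis .
qed


lemma ee_rec_lower: assumes k2: "k \<ge> 2"
  shows "(2*real k+1) * ee k \<ge> (1/3) * (2 / fact (2*(k-1)+1))"
proof -
  have "ee 1 * ee (k-1) \<le> (\<Sum>j=1..k-1. ee j * ee (k-j))"
  proof (rule member_le_sum)
    fix j assume j: "j \<in> {1..k-1} - {1}"
    hence "ee j > 0" "ee (k-j) > 0" by (auto intro!: ee_pos)
    thus "0 \<le> ee j * ee (k-j)" by simp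
  qed (use k2 in auto)
  moreover have L: "ee (k-1) \<ge> 2 / fact (2*(k-1)+1)" using k2 by (intro ee_lower) auto
  moreover have "ee 1 * ee (k-1) \<ge> (1/3) * (2 / fact (2*(k-1)+1))"
    unfolding ee1 using L by (intro mult_left_mono) auto
  moreover have "(2*real k+1)*ee k = (\<Sum>j=1..k-1. ee j * ee (k-j))" using ee_rec[of k] k2 by simp
  ultimately show ?thesis by linarith
qed

lemma lower_aux3:
  fixes k e F G :: real
  assumes "(2*k+1) * e \<ge> (1/3) * (2 / F)" "G = (2*k) * F" "F > 0" "k \<ge> 2"
  shows "e \<ge> (8/15) / G"
proof -
  have w: "0 < 15 * k * F" using assms by simp
  have "(8/15) / G = (8 / (15 * 2 * k)) / F" unfolding assms(2) by simp
  also have "\<dots> \<le> (2/3 / (2*k+1)) / F"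
    using assms(3,4) by (intro divide_right_mono) (auto simp: field_simps)
  also have "\<dots> = ((1/3) * (2 / F)) / (2*k+1)" by simp
  also have "\<dots> \<le> e" using assms(1) assms(4) by (subst pos_divide_le_eq) (auto simp: mult.commute)
  finally show ?thesis .
qed

lemma ee_lower2: assumes "k \<ge> 2" shows "ee k \<ge> (8/15) / fact (2*k)"
proof -
  have B: "fact (2*k) = (2*real k) * fact (2*(k-1)+1)"
  proof -
    have "2*k = Suc (2*(k-1)+1)" using assms by simp
    hence "fact (2*k) = real (Suc (2*(k-1)+1)) * fact (2*(k-1)+1)"
      by (metis fact_Suc of_nat_fact of_nat_mult)
    thus ?thesis using assms by (simp add: of_nat_diff)
  qed
  have C: "fact (2*(k-1)+1) > (0::real)" by simp
  have D: "real k \<ge> 2" using assms by simp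
  show ?thesis using lower_aux3[where k="real k" and e="ee k" and F="fact (2*(k-1)+1)" and G="fact (2*k)",
      OF ee_rec_lower[OF assms] B C D] .
qed

lemma aa_nonneg: "0 \<le> aa k"
proof (cases "k = 0")
  case True thus ?thesis by (simp add: aa0)
next
  case False
  have "(4::real)^k \<ge> 4" using False by (metis One_nat_def Suc_leI neq0_conv power_increasing power_one_right zero_le_numeral one_le_numeral)
  thus ?thesis using aa_ee[of k] False ee_pos[of k] by simp
qed

lemma aa_ee': assumes "k \<ge> 1" shows "aa k = ee k - 2 * (ee k / 4^k)"
  unfolding aa_ee[OF assms] by (simp add: diff_divide_distrib algebra_simps)

lemma aa_le_ee: assumes "k \<ge> 1" shows "aa k \<le> ee k"
proof -
  have "0 \<le> ee k / 4^k" using ee_pos[OF assms] by simp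
  thus ?thesis unfolding aa_ee'[OF assms] by linarith
qed

lemma aa_bound: "aa k \<le> 2 * (1/6)^k"
proof (cases "k = 0")
  case True thus ?thesis by (simp add: aa0)
next
  case False
  hence "aa k \<le> 2 / 6^k" using aa_le_ee ee_upper by (meson less_one not_le order_trans)
  thus ?thesis by (simp add: power_divide)
qed

lemma c_eq: assumes "k \<ge> 1" shows "c_coeff k = 3 * aa k + (-1)^k / fact (2*k)"
proof -
  have B: "bernoulli (2*k) = gg (2*k) * fact (2*k)" using assms by (simp add: gg_def)
  have "\<bar>gg (2*k)\<bar> = ee k / 4^k" using ee_pos[OF assms] unfolding gg_ee by (simp add: abs_mult)
  hence A: "\<bar>bernoulli (2*k)\<bar> = ee k / 4^k * fact (2*k)" unfolding B by (simp add: abs_mult)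
  have P: "(2::real)^(2*k) = 4^k" by (simp add: power_mult)
  show ?thesis unfolding c_coeff_def A P aa_ee[OF assms] by (simp add: field_simps)
qed

lemma c_pos: assumes "k \<ge> 2" shows "c_coeff k > 0"
proof -
  have "(4::real)^k \<ge> 16" using power_increasing[of 2 k "4::real"] assms by simp
  have e: "ee k > 0" using ee_pos[of k] assms by simp
  have "ee k / 4^k \<le> ee k / 16" using e \<open>(4::real)^k \<ge> 16\<close> by (intro divide_left_mono) auto
  moreover have "aa k = ee k - 2 * (ee k / 4^k)" using aa_ee'[of k] assms by simp
  ultimately have A: "aa k \<ge> 7/8 * ee k" by linarith
  have F: "fact (2*k) > (0::real)" by simp
  have Bd: "ee k \<ge> (8/15) / fact (2*k)" by (rule ee_lower2[OF assms])
  have M: "(-1::real)^k / fact (2*k) \<ge> - 1 / fact (2*k)"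
    by (intro divide_right_mono) (auto simp: minus_one_power_iff)
  have "3 * (7/8) * ((8/15) / fact (2*k)) - 1 / fact (2*k) = (2/5) / (fact (2*k) :: real)"
    by (simp add: field_simps)
  moreover have "(2/5) / (fact (2*k) :: real) > 0" using F by simp
  ultimately have "3 * aa k + (-1)^k / fact (2*k) > 0" using A Bd M by linarith
  thus ?thesis using c_eq[of k] assms by simp
qed



definition gam :: "nat \<Rightarrow> real" where "gam k = 3 * aa k + (-1)^k / fact (2*k)"

lemma gam0: "gam 0 = 4" by (simp add: gam_def aa0)
lemma gam_c: "k \<ge> 1 \<Longrightarrow> gam k = c_coeff k" by (simp add: gam_def c_eq)

lemma A_summable: assumes "0 \<le> y" "y < 6" shows "summable (\<lambda>k. norm (aa k * y^k))"
proof (rule summable_comparison_test'[where N=0])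
  show "summable (\<lambda>k. 2 * (y/6)^k)" using assms by (intro summable_mult summable_geometric) simp
  fix k :: nat
  have "norm (norm (aa k * y^k)) = aa k * y^k" using aa_nonneg[of k] assms by simp
  also have "\<dots> \<le> 2 * (1/6)^k * y^k" using aa_bound[of k] assms by (intro mult_right_mono) auto
  also have "\<dots> = 2 * (y/6)^k" by (simp add: power_divide)
  finally show "norm (norm (aa k * y^k)) \<le> 2 * (y/6)^k" .
qed

lemma B_summable: "summable (\<lambda>k. norm ((-1)^k / fact (2*k+1) * (y::real)^k))"
proof (rule summable_comparison_test'[where N=0])
  show "summable (\<lambda>k. inverse (fact k) * \<bar>y\<bar>^k)" by (rule summable_exp)
  fix k :: nat
  have "fact k \<le> (fact (2*k+1) :: real)" by (intro fact_mono) auto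
  hence "1 / fact (2*k+1) \<le> inverse (fact k :: real)"
    by (simp add: divide_simps)
  hence "1 / fact (2*k+1) * \<bar>y\<bar>^k \<le> inverse (fact k) * \<bar>y\<bar>^k" by (intro mult_right_mono) auto
  thus "norm (norm ((-1)^k / fact (2*k+1) * y^k)) \<le> inverse (fact k) * \<bar>y\<bar>^k"
    by (simp add: abs_mult power_abs)
qed

lemma sinc_sums: fixes x :: real assumes "x \<noteq> 0" shows "(\<lambda>k. (-1)^k / fact (2*k+1) * (x^2)^k) sums (sin x / x)"
proof -
  have "(\<lambda>n. (- 1) ^ n / (fact (2 * n + 1)) * x ^ (2 * n + 1) / x) sums (sin x / x)"
    using sums_divide[OF sin_paired[of x], of x] .
  moreover have "(- 1) ^ n / (fact (2 * n + 1)) * x ^ (2 * n + 1) / x = (-1)^n / fact (2*n+1) * (x^2)^n" for n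
    using assms by (simp add: power_mult[symmetric] mult.commute[of 2])
  ultimately show ?thesis by simp
qed

lemma A_sums: fixes x :: real assumes "0 < x" "x < 2" shows "(\<lambda>k. aa k * (x^2)^k) sums (x / sin x)"
proof -
  have y: "0 \<le> x^2" "x^2 < 6"
  proof -
    show "0 \<le> x^2" by simp
    have "x^2 < 2^2" using assms by (intro power_strict_mono) auto
    thus "x^2 < 6" by simp
  qed
  have sx: "sin x > 0" using assms pi_ge_two by (intro sin_gt_zero) auto
  have C: "(\<lambda>N. \<Sum>i\<le>N. (aa i * (x^2)^i) * ((-1)^(N-i) / fact (2*(N-i)+1) * (x^2)^(N-i)))
      sums ((\<Sum>k. aa k * (x^2)^k) * (\<Sum>k. (-1)^k / fact (2*k+1) * (x^2)^k))"
    by (rule Cauchy_product_sums[OF A_summable[OF y] B_summable])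
  have "(\<Sum>i\<le>N. (aa i * (x^2)^i) * ((-1)^(N-i) / fact (2*(N-i)+1) * (x^2)^(N-i)))
        = (if N = 0 then 1 else 0)" for N
  proof -
    have "(\<Sum>i\<le>N. (aa i * (x^2)^i) * ((-1)^(N-i) / fact (2*(N-i)+1) * (x^2)^(N-i)))
        = (\<Sum>i\<le>N. (x^2)^N * (aa i * ((-1)^(N-i) / fact (2*(N-i)+1))))"
    proof (intro sum.cong refl)
      fix i assume "i \<in> {..N}"
      hence iN: "i + (N - i) = N" by simp
      have P: "(x^2)^i * (x^2)^(N-i) = (x^2)^N" by (simp only: power_add[symmetric] iN)
      have "(aa i * (x^2)^i) * ((-1)^(N-i) / fact (2*(N-i)+1) * (x^2)^(N-i))
          = ((x^2)^i * (x^2)^(N-i)) * (aa i * ((-1)^(N-i) / fact (2*(N-i)+1)))"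
        by (simp only: mult_ac)
      thus "(aa i * (x^2)^i) * ((-1)^(N-i) / fact (2*(N-i)+1) * (x^2)^(N-i))
          = (x^2)^N * (aa i * ((-1)^(N-i) / fact (2*(N-i)+1)))"
        by (simp only: P)
    qed
    also have "\<dots> = (x^2)^N * (if N = 0 then 1 else 0)" by (simp only: sum_distrib_left[symmetric] aa_coeff)
    finally show ?thesis by simp
  qed
  hence E: "(\<lambda>N. \<Sum>i\<le>N. (aa i * (x^2)^i) * ((-1)^(N-i) / fact (2*(N-i)+1) * (x^2)^(N-i)))
     = (\<lambda>N. if N = 0 then 1 else 0)" by (intro ext)
  have U: "(\<Sum>k. (-1)^k / fact (2*k+1) * (x^2)^k) = sin x / x"
    using sums_unique[OF sinc_sums[of x]] assms by simp
  have "(\<lambda>N. if N = 0 then 1 else 0) sums ((\<Sum>k. aa k * (x^2)^k) * (sin x / x))"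
    using C unfolding E U .
  moreover have "(\<lambda>N. if N = 0 then (1::real) else 0) sums 1" using sums_single[of 0 "\<lambda>_. 1::real"] by simp
  ultimately have "(\<Sum>k. aa k * (x^2)^k) * (sin x / x) = 1" by (rule sums_unique2)
  hence "(\<Sum>k. aa k * (x^2)^k) = x / sin x" using sx assms by (simp add: field_simps)
  moreover have "summable (\<lambda>k. aa k * (x^2)^k)" by (rule summable_norm_cancel[OF A_summable[OF y]])
  ultimately show ?thesis using summable_sums by metis
qed

lemma gam_sums: fixes x :: real assumes "0 < x" "x < 2" shows "(\<lambda>k. gam k * (x^2)^k) sums (3 * (x / sin x) + cos x)"
proof -
  have "(\<lambda>k. 3 * (aa k * (x^2)^k) + (-1)^k / fact (2*k) * x^(2*k)) sums (3 * (x / sin x) + cos x)"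
    by (intro sums_add sums_mult A_sums[OF assms] cos_paired)
  moreover have "3 * (aa k * (x^2)^k) + (-1)^k / fact (2*k) * x^(2*k) = gam k * (x^2)^k" for k
  proof -
    have "x^(2*k) = (x^2)^k" by (rule power_mult)
    thus ?thesis by (simp add: gam_def algebra_simps)
  qed
  ultimately show ?thesis by simp
qed


lemma head_sum: "(\<Sum>k<n+1. gam k * (z^2)^k) = 4 + (\<Sum>k=1..n. c_coeff k * z^(2*k))"
proof -
  have "(\<Sum>k<n+1. gam k * (z^2)^k) = (\<Sum>k=0..n. gam k * (z^2)^k)"
    by (rule sum.cong) auto
  also have "\<dots> = gam 0 * (z^2)^0 + (\<Sum>k=Suc 0..n. gam k * (z^2)^k)"
    by (rule sum.atLeast_Suc_atMost) simp
  also have "(\<Sum>k=Suc 0..n. gam k * (z^2)^k) = (\<Sum>k=1..n. c_coeff k * z^(2*k))"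
  proof (rule sum.cong)
    fix k assume "k \<in> {1..n}"
    hence "gam k = c_coeff k" by (intro gam_c) auto
    moreover have "(z^2)^k = z^(2*k)" by (rule power_mult[symmetric])
    ultimately show "gam k * (z^2)^k = c_coeff k * z^(2*k)" by simp
  qed simp
  finally show ?thesis by (simp add: gam0)
qed

theorem theorem6:
  fixes x :: real and m :: nat
  assumes "0 < x" and "x < pi / 2" and "m \<ge> 3"
  shows "4 + (\<Sum>k=1..m-1. c_coeff k * x ^ (2*k))
           + (2 * x / pi) ^ (2*m) * (3 * pi / 2 - 4 - (\<Sum>k=1..m-1. c_coeff k * (pi/2) ^ (2*k)))
         > 3 * (x / sin x) + cos x
       \<and> 3 * (x / sin x) + cos x > 4 + (\<Sum>k=1..m. c_coeff k * x ^ (2*k))"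
proof -
  define f where "f = 3 * (x / sin x) + cos x"
  define y where "y = x^2"
  define Y where "Y = (pi/2)^2"
  have x2: "x < 2" using assms(2) pi_half_less_two by linarith
  have fx: "(\<lambda>k. gam k * y^k) sums f" unfolding f_def y_def using gam_sums[OF assms(1) x2] .
  have "(\<lambda>k. gam k * Y^k) sums (3 * ((pi/2) / sin (pi/2)) + cos (pi/2))"
    unfolding Y_def by (rule gam_sums) (simp_all add: pi_less_4)
  hence fY: "(\<lambda>k. gam k * Y^k) sums (3 * pi / 2)" by simp
  have sx: "summable (\<lambda>k. gam k * y^k)" using fx by (rule sums_summable)
  have sY: "summable (\<lambda>k. gam k * Y^k)" using fY by (rule sums_summable)
  have y0: "0 < y" unfolding y_def using assms(1) by simp
  have yY: "y < Y" unfolding y_def Y_def using assms(1,2) by (intro power_strict_mono) auto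
  have Y0: "0 < Y" unfolding Y_def by simp
  have gpos: "k \<ge> 2 \<Longrightarrow> gam k > 0" for k using gam_c[of k] c_pos[of k] by simp

  have "f = (\<Sum>j. gam (j + (m+1)) * y^(j + (m+1))) + (\<Sum>k<m+1. gam k * y^k)"
    using suminf_split_initial_segment[OF sx, of "m+1"] sums_unique[OF fx] by simp
  moreover have "(\<Sum>j. gam (j + (m+1)) * y^(j + (m+1))) > 0"
  proof (rule suminf_pos2[where i=0])
    show "summable (\<lambda>j. gam (j + (m+1)) * y^(j + (m+1)))" using sx by (subst summable_iff_shift)
    show "0 \<le> gam (n + (m+1)) * y^(n + (m+1))" for n
      using gpos[of "n+(m+1)"] y0 assms(3) by simp
    show "0 < gam (0 + (m+1)) * y^(0 + (m+1))"
      using gpos[of "m+1"] y0 assms(3) by simp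
  qed
  moreover have "(\<Sum>k<m+1. gam k * y^k) = 4 + (\<Sum>k=1..m. c_coeff k * x^(2*k))"
    unfolding y_def by (rule head_sum)
  ultimately have low: "f > 4 + (\<Sum>k=1..m. c_coeff k * x^(2*k))" by linarith

  define r where "r = (y / Y)^m"
  have r_eq: "(2 * x / pi) ^ (2*m) = r"
  proof -
    have "(2 * x / pi) ^ (2*m) = ((2 * x / pi)^2)^m" by (rule power_mult)
    also have "(2 * x / pi)^2 = y / Y" unfolding y_def Y_def by (simp add: power_divide field_simps)
    finally show ?thesis unfolding r_def .
  qed
  have m1: "m - 1 + 1 = m" using assms(3) by simp
  have hx: "(\<Sum>k<m. gam k * y^k) = 4 + (\<Sum>k=1..m-1. c_coeff k * x^(2*k))"
    using head_sum[where n="m-1" and z=x] unfolding m1 y_def .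
  have hY: "(\<Sum>k<m. gam k * Y^k) = 4 + (\<Sum>k=1..m-1. c_coeff k * (pi/2)^(2*k))"
    using head_sum[where n="m-1" and z="pi/2"] unfolding m1 Y_def .
  define Ty where "Ty = (\<Sum>j. gam (j + m) * y^(j + m))"
  define TY where "TY = (\<Sum>j. gam (j + m) * Y^(j + m))"
  have fT: "f = Ty + (\<Sum>k<m. gam k * y^k)"
    unfolding Ty_def using suminf_split_initial_segment[OF sx, of m] sums_unique[OF fx] by simp
  have YT: "3 * pi / 2 = TY + (\<Sum>k<m. gam k * Y^k)"
    unfolding TY_def using suminf_split_initial_segment[OF sY, of m] sums_unique[OF fY] by simp
  have sTy: "summable (\<lambda>j. gam (j + m) * y^(j + m))" using sx by (subst summable_iff_shift)
  have sTY: "summable (\<lambda>j. gam (j + m) * Y^(j + m))" using sY by (subst summable_iff_shift)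
  have rTY: "r * TY = (\<Sum>j. r * (gam (j + m) * Y^(j + m)))"
    unfolding TY_def by (rule suminf_mult[OF sTY, symmetric])
  have rterm: "r * Y^(j + m) = y^m * Y^j" for j
    unfolding r_def using Y0 by (simp add: power_divide power_add field_simps)
  have "(\<Sum>j. r * (gam (j + m) * Y^(j + m))) - Ty = (\<Sum>j. r * (gam (j + m) * Y^(j + m)) - gam (j + m) * y^(j + m))"
    unfolding Ty_def by (rule suminf_diff[OF summable_mult[OF sTY] sTy])
  moreover have "(\<Sum>j. r * (gam (j + m) * Y^(j + m)) - gam (j + m) * y^(j + m)) > 0"
  proof (rule suminf_pos2[where i=1])
    show "summable (\<lambda>j. r * (gam (j + m) * Y^(j + m)) - gam (j + m) * y^(j + m))"
      by (intro summable_diff summable_mult sTY sTy)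
    have diffeq: "r * (gam (j + m) * Y^(j + m)) - gam (j + m) * y^(j + m) = gam (j + m) * y^m * (Y^j - y^j)" for j
    proof -
      have "r * (gam (j + m) * Y^(j + m)) = gam (j + m) * (r * Y^(j + m))" by simp
      also have "\<dots> = gam (j + m) * (y^m * Y^j)" by (simp only: rterm)
      finally show ?thesis by (simp add: power_add algebra_simps)
    qed
    show "0 \<le> r * (gam (n + m) * Y^(n + m)) - gam (n + m) * y^(n + m)" for n
    proof -
      have "y^n \<le> Y^n" using y0 yY by (intro power_mono) auto
      hence B: "0 \<le> Y^n - y^n" by simp
      have A: "0 \<le> gam (n + m) * y^m" using gpos[of "n+m"] assms(3) y0 by simp
      show ?thesis unfolding diffeq by (rule mult_nonneg_nonneg[OF A B])
    qed
    show "0 < r * (gam (1 + m) * Y^(1 + m)) - gam (1 + m) * y^(1 + m)"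
    proof -
      have "0 < gam (1 + m) * y^m" using gpos[of "1+m"] assms(3) y0 by simp
      thus ?thesis unfolding diffeq using yY by simp
    qed
  qed
  ultimately have "r * TY > Ty" using rTY by linarith
  moreover have TYe: "3 * pi / 2 - 4 - (\<Sum>k=1..m-1. c_coeff k * (pi/2)^(2*k)) = TY"
    using YT hY by linarith
  ultimately have up: "4 + (\<Sum>k=1..m-1. c_coeff k * x^(2*k)) + r * (3 * pi / 2 - 4 - (\<Sum>k=1..m-1. c_coeff k * (pi/2)^(2*k))) > f"
    unfolding TYe using fT hx by linarith
  show ?thesis using up low unfolding r_eq f_def by simp
qed

end
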